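(* Let $\mathcal{A}=\{a_1,\dots,a_{n+3}\}\subset\mathbb{Z}^n$ affinely generate $\mathbb{Z}^n$ with $a_1=\mathbf{O}$, fix an odd cell $C$ of $\mathcal{A}$, and let $\Gamma$, $\overline{\nabla}_{\mathcal{A}}\subseteq\mathbb{C}^2$ and $\overline{\Delta}_{\mathcal{A}}$ be as in the context. Let $\ell_i([\lambda_1:\lambda_2])=\alpha_i\lambda_1+\beta_i\lambda_2$ ($i=1,\dots,n+3$) be linear forms with real coefficients such that $\{(\ell_1(\lambda),\dots,\ell_{n+3}(\lambda)):\lambda\in\mathbb{C}^2\}$ is the space of all $u\in\mathbb{C}^{n+3}$ with $\mathcal{A}u=\mathbf{O}$ and $\sum_iu_i=0$, and set $\Psi(\lambda)=\Gamma(\ell_1(\lambda),\dots,\ell_{n+3}(\lambda))$, viewed as a (multivalued) map defined on $\mathbb{P}^1_{\mathbb{C}}$. Let $Z$ be the set of points of $\overline{\nabla}_{\mathcal{A}}$ at which the gradient of $\overline{\Delta}_{\mathcal{A}}$ vanishes. If $\Psi([\lambda_1:\lambda_2])\in(\mathbb{R}^* )^2\cap(\overline{\nabla}_{\mathcal{A}}\setminus Z)$, then $[\lambda_1:\lambda_2]$ can be chosen in $\mathbb{P}^1_{\mathbb{R}}$. In other words, $(\mathbb{R}^2\cap\overline{\nabla}_{\mathcal{A}})\setminus\Psi(\mathbb{P}^1_{\mathbb{R}})$ is finite.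
   Context: $\mathbb{R}^*=\mathbb{R}\setminus\{0\}$. Identify $\mathcal{A}$ with the $n\times(n+3)$ integer matrix with columns $a_i$. $\nabla_{\mathcal{A}}\subseteq\mathbb{P}^{n+2}_{\mathbb{C}}$ is the closure of the set of $[c_1:\cdots:c_{n+3}]$ such that the complex zero set of $\sum c_ix^{a_i}$ has a singular point in $(\mathbb{C}^* )^n$; when it has codimension $1$, $\Delta_{\mathcal{A}}\in\mathbb{Z}[c_1,\dots,c_{n+3}]$ is its irreducible defining polynomial (defined up to sign), otherwise $\Delta_{\mathcal{A}}=1$. An odd cell is a set $C=\{i_1,\dots,i_n\}\subseteq\{2,\dots,n+3\}$ with $\det[a_{i_1},\dots,a_{i_n}]$ odd; $C'=\{2,\dots,n+3\}\setminus C$ (two indices). For vectors/matrices indexed by $\{1,\dots,n+3\}$, subscripts $C$, $C'$ denote the corresponding entries/columns. $\Gamma(y)=\frac{y_{C'}}{y_1}\cdot\left(\frac{y_C}{y_1}\right)^{-\mathcal{A}_C^{-1}\mathcal{A}_{C'}}$ (coordinatewise operations; $w^M$ has $j$-th entry $\prod_iw_i^{M_{ij}}$), multivalued on complex inputs and single-valued real (using real odd roots, the denominators being odd) on real inputs. $\overline{\nabla}_{\mathcal{A}}\subseteq\mathbb{C}^2$ is the closure of $\{\Gamma(u): u\in(\mathbb{C}^* )^{n+3},\ \mathcal{A}u=\mathbf{O},\ \sum u_i=0\}$. The reduced discriminant is $\overline{\Delta}_{\mathcal{A}}(\delta_{C'})=\Delta_{\mathcal{A}}(\delta')$ where $\delta'$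 has entries $1$ at index $1$ and at the indices in $C$, and entries $\delta_{C'}$ at the indices in $C'$; it is an irreducible integer polynomial defining $\overline{\nabla}_{\mathcal{A}}$. *)

theory Defs
  imports "HOL-Analysis.Analysis" "Jordan_Normal_Form.Determinant"
    "HOL-Computational_Algebra.Polynomial"
begin

text \<open>Conventions: the configuration A = {a_1,...,a_{n+3}} is an integer matrix
  with n rows and n+3 columns; column index i (0-based) holds a_{i+1}.
  So a_1 is column 0, and cells are subsets of column indices {1..n+2}.
  Vectors indexed by {1..n+3} are functions on nat, index i-1 is used for entry i.\<close>

definition colsub :: "int mat \<Rightarrow> nat list \<Rightarrow> int mat" where
  "colsub A cs = mat (dim_row A) (length cs) (\<lambda>(r,k). A $$ (r, cs ! k))"

definition affinely_generates :: "int mat \<Rightarrow> bool" where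
  "affinely_generates A \<longleftrightarrow> (\<forall>v::nat \<Rightarrow> int. \<exists>c::nat \<Rightarrow> int.
     (\<Sum>i<dim_col A. c i) = 1 \<and>
     (\<forall>r<dim_row A. v r = (\<Sum>i<dim_col A. c i * A $$ (r,i))))"

definition odd_cell :: "int mat \<Rightarrow> nat set \<Rightarrow> bool" where
  "odd_cell A C \<longleftrightarrow> C \<subseteq> {1..<dim_col A} \<and> card C = dim_row A \<and>
     odd (det (colsub A (sorted_list_of_set C)))"

definition co_cell :: "int mat \<Rightarrow> nat set \<Rightarrow> nat list" where
  "co_cell A C = sorted_list_of_set ({1..<dim_col A} - C)"

definition gexp :: "int mat \<Rightarrow> nat set \<Rightarrow> rat mat" where
  "gexp A C = (THE M. M \<in> carrier_mat (dim_row A) 2 \<and>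
     map_mat rat_of_int (colsub A (sorted_list_of_set C)) * M =
       - map_mat rat_of_int (colsub A (co_cell A C)))"

text \<open>Real power with rational exponent of odd denominator, using real odd roots.\<close>
definition realpow_rat :: "real \<Rightarrow> rat \<Rightarrow> real" where
  "realpow_rat w q = (case quotient_of q of (a, b) \<Rightarrow> root (nat b) w powi a)"

definition gamma_real :: "int mat \<Rightarrow> nat set \<Rightarrow> (nat \<Rightarrow> real) \<Rightarrow> real \<times> real" where
  "gamma_real A C y = (let Cl = sorted_list_of_set C; D = co_cell A C; M = gexp A C;
     g = (\<lambda>j. y (D ! j) / y 0 *
            (\<Prod>i<dim_row A. realpow_rat (y (Cl ! i) / y 0) (M $$ (i, j))))
   in (g 0, g 1))"

text \<open>Multivalued complex Gamma: all values obtained from a choice of logarithms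
  L_i of (y_C / y_1)_i, namely y_{C'}/y_1 * exp (M^T L).\<close>
definition gamma_set :: "int mat \<Rightarrow> nat set \<Rightarrow> (nat \<Rightarrow> complex) \<Rightarrow> (complex \<times> complex) set" where
  "gamma_set A C y = (let Cl = sorted_list_of_set C; D = co_cell A C; M = gexp A C;
     g = (\<lambda>L j. y (D ! j) / y 0 *
            exp (\<Sum>i<dim_row A. of_rat (M $$ (i, j)) * L i))
   in {(g L 0, g L 1) | L. \<forall>i<dim_row A. exp (L i) = y (Cl ! i) / y 0})"

definition kernel_space :: "int mat \<Rightarrow> (nat \<Rightarrow> complex) set" where
  "kernel_space A = {u. (\<forall>i\<ge>dim_col A. u i = 0) \<and> (\<Sum>i<dim_col A. u i) = 0 \<and>
     (\<forall>r<dim_row A. (\<Sum>i<dim_col A. of_int (A $$ (r,i)) * u i) = 0)}"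

definition nabla_bar :: "int mat \<Rightarrow> nat set \<Rightarrow> (complex \<times> complex) set" where
  "nabla_bar A C = closure (\<Union>u \<in> {u \<in> kernel_space A. \<forall>i<dim_col A. u i \<noteq> 0}. gamma_set A C u)"

text \<open>Bivariate integer polynomials as int poly poly: p(x,y) = sum_i (coeff p i)(y) x^i.\<close>
definition eval2 :: "int poly poly \<Rightarrow> complex \<Rightarrow> complex \<Rightarrow> complex" where
  "eval2 p x y = poly (map_poly (\<lambda>q. poly (map_poly of_int q) y) p) x"

definition dX :: "int poly poly \<Rightarrow> int poly poly" where "dX p = pderiv p"
definition dY :: "int poly poly \<Rightarrow> int poly poly" where "dY p = map_poly pderiv p"

definition lform :: "(nat \<Rightarrow> real) \<Rightarrow> (nat \<Rightarrow> real) \<Rightarrow> nat \<Rightarrow> complex \<Rightarrow> complex \<Rightarrow> nat \<Rightarrow> complex" where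
  "lform \<alpha> \<beta> N l1 l2 = (\<lambda>i. if i < N then of_real (\<alpha> i) * l1 + of_real (\<beta> i) * l2 else 0)"

definition rlform :: "(nat \<Rightarrow> real) \<Rightarrow> (nat \<Rightarrow> real) \<Rightarrow> nat \<Rightarrow> real \<Rightarrow> real \<Rightarrow> nat \<Rightarrow> real" where
  "rlform \<alpha> \<beta> N m1 m2 = (\<lambda>i. if i < N then \<alpha> i * m1 + \<beta> i * m2 else 0)"

end

theory Submission imports Defs "HOL-Complex_Analysis.Complex_Analysis" "HOL-Computational_Algebra.Fundamental_Theorem_Algebra" begin

lemma mp_add: "map_poly (of_int :: int \<Rightarrow> complex) (a + b) = map_poly of_int a + map_poly of_int b"
  by (rule poly_eqI) (simp add: coeff_map_poly)

lemma mp_pderiv: "map_poly (of_int :: int \<Rightarrow> complex) (pderiv a) = pderiv (map_poly of_int a)"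
  by (rule poly_eqI) (simp add: coeff_map_poly coeff_pderiv)

lemma eval2_0[simp]: "eval2 0 x y = 0" unfolding eval2_def by simp

lemma eval2_pCons: "eval2 (pCons a p) x y = poly (map_poly of_int a) y + x * eval2 p x y"
  unfolding eval2_def by (subst map_poly_pCons) auto

lemma eval2_add: "eval2 (p + q) x y = eval2 p x y + eval2 q x y"
proof -
  have "map_poly (\<lambda>q. poly (map_poly (of_int :: int \<Rightarrow> complex) q) y) (p + q) =
        map_poly (\<lambda>q. poly (map_poly of_int q) y) p + map_poly (\<lambda>q. poly (map_poly of_int q) y) q"
    by (rule poly_eqI) (simp add: coeff_map_poly mp_add)
  then show ?thesis unfolding eval2_def by simp
qed

lemma eval2_deriv:
  assumes "(X has_field_derivative X') (at t)" "(Y has_field_derivative Y') (at t)"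
  shows "((\<lambda>t. eval2 p (X t) (Y t)) has_field_derivative
     (eval2 (dX p) (X t) (Y t) * X' + eval2 (dY p) (X t) (Y t) * Y')) (at t)"
  using assms
proof (induction p arbitrary: X Y X' Y' rule: pCons_induct)
  case 0
  then show ?case by (simp add: dX_def dY_def)
next
  case (pCons a p)
  have IH: "((\<lambda>t. eval2 p (X t) (Y t)) has_field_derivative
     (eval2 (dX p) (X t) (Y t) * X' + eval2 (dY p) (X t) (Y t) * Y')) (at t)"
    using pCons.IH pCons.prems by blast
  have P: "((\<lambda>t. poly (map_poly of_int a) (Y t)) has_field_derivative poly (pderiv (map_poly of_int a)) (Y t) * Y') (at t)"
    using DERIV_chain2[OF poly_DERIV pCons.prems(2)] by simp
  have "((\<lambda>t. poly (map_poly of_int a) (Y t) + X t * eval2 p (X t) (Y t)) has_field_derivative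
     poly (pderiv (map_poly of_int a)) (Y t) * Y' + (X' * eval2 p (X t) (Y t) + (eval2 (dX p) (X t) (Y t) * X' + eval2 (dY p) (X t) (Y t) * Y') * X t)) (at t)"
    using DERIV_add[OF P DERIV_mult[OF pCons.prems(1) IH]] by simp
  moreover have "dX (pCons a p) = p + pCons 0 (dX p)" unfolding dX_def by (simp add: pderiv_pCons)
  moreover have "dY (pCons a p) = pCons (pderiv a) (dY p)" unfolding dY_def by (subst map_poly_pCons) auto
  ultimately show ?case
    by (simp add: eval2_pCons eval2_add mp_pderiv algebra_simps)
qed

lemma eval2_cnj: "cnj (eval2 p x y) = eval2 p (cnj x) (cnj y)"
proof (induction p rule: pCons_induct)
  case (pCons a p)
  have "cnj (poly (map_poly of_int a) y) = poly (map_poly of_int a) (cnj y)"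
    by (simp add: poly_cnj map_poly_map_poly o_def)
  then show ?case using pCons.IH by (simp add: eval2_pCons)
qed simp

lemma eval2_real: "eval2 p (of_real a) (of_real b) \<in> \<real>"
  using eval2_cnj[of p "of_real a" "of_real b"] by (simp add: Reals_cnj_iff)

lemma realpow_pow:
  assumes d: "odd (dd::nat)" and e: "of_nat dd * Q = of_int e"
  shows "realpow_rat w Q ^ dd = w powi e"
proof -
  obtain a b where ab: "quotient_of Q = (a, b)" by (cases "quotient_of Q")
  have b0: "b > 0" using quotient_of_denom_pos[OF ab] .
  have Qe: "Q = of_int a / of_int b" using quotient_of_div[OF ab] .
  have cop: "coprime a b" using quotient_of_coprime[OF ab] .
  have "of_nat dd * (of_int a / of_int b) = (of_int e :: rat)" using e Qe by simp
  then have "of_int (int dd * a) = (of_int (e * b) :: rat)" using b0 by (simp add: field_simps)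
  then have eq: "int dd * a = e * b" by linarith
  then have "b dvd int dd * a" by simp
  then have "b dvd int dd" using cop by (simp add: coprime_commute coprime_dvd_mult_left_iff)
  then obtain k where k: "int dd = b * k" by blast
  have ek: "e = a * k" using eq k b0 by (simp add: algebra_simps)
  have "odd b" using d k by (metis dvd_triv_left even_mult_iff even_of_nat)
  then have ob: "odd (nat b)" using b0 by (simp add: even_nat_iff)
  have rb: "root (nat b) w ^ nat b = w" using odd_real_root_pow[OF ob] .
  have "realpow_rat w Q ^ dd = root (nat b) w powi (a * int dd)"
    unfolding realpow_rat_def ab by (simp add: power_int_power')
  also have "a * int dd = int (nat b) * e" using k ek b0 by simp
  also have "root (nat b) w powi (int (nat b) * e) = (root (nat b) w ^ nat b) powi e"
    by (simp add: power_int_power)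
  finally show ?thesis using rb by simp
qed

lemma finite_pow_eq: assumes "dd > 0" shows "finite {z :: complex. z ^ dd = c}"
proof -
  let ?P = "monom 1 dd - [:c:]"
  have "coeff ?P dd = 1" using assms by (cases dd) auto
  then have "?P \<noteq> 0" by (metis coeff_0 zero_neq_one)
  then have "finite {z. poly ?P z = 0}" by (rule poly_roots_finite)
  moreover have "{z. poly ?P z = 0} = {z. z ^ dd = c}" by (auto simp: poly_monom)
  ultimately show ?thesis by simp
qed

lemma zeroset_infinite:
  assumes "eval2 p x0 y0 = 0"
  shows "infinite {(x, y). eval2 p x y = 0}"
proof
  assume fin: "finite {(x, y). eval2 p x y = 0}"
  let ?ev = "\<lambda>y q. poly (map_poly (of_int :: int \<Rightarrow> complex) q) y"
  show False
  proof (cases "degree p = 0")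
    case True
    then obtain c where pc: "p = [:c:]" by (metis degree_eq_zeroE)
    have "eval2 p x y0 = eval2 p x0 y0" for x unfolding pc by (simp add: eval2_pCons)
    then have "eval2 p x y0 = 0" for x using assms by simp
    then have "range (\<lambda>x. (x, y0)) \<subseteq> {(x, y). eval2 p x y = 0}" by auto
    moreover have "infinite (range (\<lambda>x::complex. (x, y0)))"
    proof
      assume "finite (range (\<lambda>x::complex. (x, y0)))"
      moreover have "inj (\<lambda>x::complex. (x, y0))" by (auto simp: inj_def)
      ultimately have "finite (UNIV :: complex set)" using finite_imageD by blast
      then show False by (simp add: infinite_UNIV_char_0)
    qed
    ultimately show False using fin finite_subset by blast
  next
    case False
    let ?lc = "map_poly (of_int :: int \<Rightarrow> complex) (lead_coeff p)"
    have "lead_coeff p \<noteq> 0" using False by auto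
    then have "?lc \<noteq> 0" by (simp add: map_poly_eq_0_iff)
    then have finr: "finite {y. poly ?lc y = 0}" by (rule poly_roots_finite)
    have "\<exists>x. eval2 p x y = 0" if "poly ?lc y \<noteq> 0" for y
    proof -
      let ?Q = "map_poly (?ev y) p"
      have "coeff ?Q (degree p) \<noteq> 0" using that by (simp add: coeff_map_poly)
      then have "degree ?Q = degree p" using map_poly_degree_leq[of "?ev y" p] le_degree by (metis antisym)
      then have "\<not> constant (poly ?Q)" using False by (simp add: constant_degree)
      then obtain x where "poly ?Q x = 0" using fundamental_theorem_of_algebra by blast
      then show ?thesis unfolding eval2_def by blast
    qed
    then have "- {y. poly ?lc y = 0} \<subseteq> snd ` {(x, y). eval2 p x y = 0}" by force
    moreover have "finite (snd ` {(x, y). eval2 p x y = 0})" using fin by simp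
    ultimately have "finite (- {y. poly ?lc y = 0})" using finite_subset by blast
    then have "finite (UNIV :: complex set)" using finr by (metis Compl_partition finite_Un)
    then show False by (simp add: infinite_UNIV_char_0)
  qed
qed

locale hk =
  fixes A :: "int mat" and n :: nat and C :: "nat set"
  assumes carr: "A \<in> carrier_mat n (n + 3)"
    and zcol: "\<forall>r<n. A $$ (r, 0) = 0"
    and oddc: "odd_cell A C"
begin

definition Cl where "Cl = sorted_list_of_set C"
definition D where "D = co_cell A C"

lemma dims: "dim_row A = n" "dim_col A = n + 3" using carr by auto

lemma C_sub: "C \<subseteq> {1..<n+3}" and cardC: "card C = n"
  using oddc dims unfolding odd_cell_def by auto

lemma finC: "finite C" using C_sub finite_subset by blast

lemma Cl: "length Cl = n" "distinct Cl" "set Cl = C"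
  using finC cardC unfolding Cl_def by auto

lemma Dset: "set D = {1..<n+3} - C" "distinct D"
  unfolding D_def co_cell_def dims by auto

lemma Dlen: "length D = 2"
proof -
  have "card ({1..<n+3} - C) = card {1..<n+3} - card C"
    using C_sub finC by (simp add: card_Diff_subset)
  then have "card ({1..<n+3} - C) = 2" using cardC by simp
  then show ?thesis using Dset distinct_card by fastforce
qed

lemma Cl_props: "i < n \<Longrightarrow> Cl ! i \<in> C \<and> Cl ! i \<noteq> 0 \<and> Cl ! i < n + 3"
proof -
  assume "i < n"
  then have "Cl ! i \<in> C" using Cl nth_mem by metis
  then show ?thesis using C_sub by auto
qed

lemma D_props: "m < 2 \<Longrightarrow> D ! m \<notin> C \<and> D ! m \<noteq> 0 \<and> D ! m < n + 3"
proof -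
  assume "m < 2"
  then have "D ! m \<in> set D" using Dlen nth_mem by metis
  then show ?thesis using Dset by auto
qed

lemma D01: "D ! 0 \<noteq> D ! 1"
  using Dset Dlen by (simp add: nth_eq_iff_index_eq)

lemma sum_list_nth: "distinct xs \<Longrightarrow> sum f (set xs) = (\<Sum>i<length xs. f (xs ! i))"
  by (simp add: sum_list_distinct_conv_sum_set[symmetric] sum_list_sum_nth atLeast0LessThan)

lemma sum_decomp: "(\<Sum>k<n+3. f k) = f 0 + (\<Sum>i<n. f (Cl ! i)) + (f (D ! 0) + f (D ! 1))"
proof -
  have U: "{..<n+3} = insert 0 (set Cl \<union> set D)"
    using Cl Dset C_sub by auto
  have "(\<Sum>k<n+3. f k) = f 0 + sum f (set Cl \<union> set D)"
    unfolding U using Cl Dset C_sub finC by (subst sum.insert) auto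
  also have "sum f (set Cl \<union> set D) = sum f (set Cl) + sum f (set D)"
    using Cl Dset finC by (intro sum.union_disjoint) auto
  also have "sum f (set Cl) = (\<Sum>i<n. f (Cl ! i))" using sum_list_nth[of Cl f] Cl by simp
  also have "sum f (set D) = f (D ! 0) + f (D ! 1)" using sum_list_nth[of D f] Dset Dlen
    by (simp add: numeral_2_eq_2)
  finally show ?thesis by (simp add: add.assoc)
qed

definition AC where "AC = colsub A Cl"
definition AD where "AD = colsub A D"
definition dt where "dt = det AC"
definition Adj where "Adj = adj_mat AC"

lemma AC_carr: "AC \<in> carrier_mat n n" unfolding AC_def colsub_def using Cl dims by auto
lemma AD_carr: "AD \<in> carrier_mat n 2" unfolding AD_def colsub_def using Dlen dims by auto
lemma Adj_carr: "Adj \<in> carrier_mat n n" unfolding Adj_def using adj_mat(1)[OF AC_carr] .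
lemma AC_idx: "r < n \<Longrightarrow> i < n \<Longrightarrow> AC $$ (r, i) = A $$ (r, Cl ! i)"
  unfolding AC_def colsub_def using Cl dims by auto
lemma AD_idx: "r < n \<Longrightarrow> m < 2 \<Longrightarrow> AD $$ (r, m) = A $$ (r, D ! m)"
  unfolding AD_def colsub_def using Dlen dims by auto

lemma dt_odd: "odd dt" using oddc unfolding odd_cell_def dt_def AC_def Cl_def by auto
lemma dt_nz: "dt \<noteq> 0" using dt_odd by auto

lemma mult_idx: "X \<in> carrier_mat a b \<Longrightarrow> Y \<in> carrier_mat b c \<Longrightarrow> i < a \<Longrightarrow> j < c \<Longrightarrow>
   (X * Y) $$ (i, j) = (\<Sum>k<b. X $$ (i, k) * Y $$ (k, j))"
  by (auto simp: scalar_prod_def atLeast0LessThan intro!: sum.cong)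

lemma AdjAC: "i < n \<Longrightarrow> k < n \<Longrightarrow> (\<Sum>r<n. Adj $$ (i, r) * AC $$ (r, k)) = (if i = k then dt else 0)"
proof -
  assume "i < n" "k < n"
  have "(Adj * AC) $$ (i, k) = (dt \<cdot>\<^sub>m 1\<^sub>m n) $$ (i, k)"
    using adj_mat(3)[OF AC_carr] unfolding Adj_def dt_def by simp
  then show ?thesis using mult_idx[OF Adj_carr AC_carr] \<open>i < n\<close> \<open>k < n\<close> by simp
qed

lemma ACAdj: "i < n \<Longrightarrow> k < n \<Longrightarrow> (\<Sum>r<n. AC $$ (i, r) * Adj $$ (r, k)) = (if i = k then dt else 0)"
proof -
  assume "i < n" "k < n"
  have "(AC * Adj) $$ (i, k) = (dt \<cdot>\<^sub>m 1\<^sub>m n) $$ (i, k)"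
    using adj_mat(2)[OF AC_carr] unfolding Adj_def dt_def by simp
  then show ?thesis using mult_idx[OF AC_carr Adj_carr] \<open>i < n\<close> \<open>k < n\<close> by simp
qed

lemma AC_inj:
  fixes x :: "nat \<Rightarrow> 'a :: field_char_0"
  assumes "\<forall>r<n. (\<Sum>k<n. of_int (AC $$ (r, k)) * x k) = 0" and "i < n"
  shows "x i = 0"
proof -
  have "of_int dt * x i = (\<Sum>k<n. (if k = i then of_int dt * x k else 0))"
    using \<open>i < n\<close> by (simp add: sum.delta)
  also have "\<dots> = (\<Sum>k<n. of_int (if i = k then dt else 0) * x k)"
    by (intro sum.cong) auto
  also have "\<dots> = (\<Sum>k<n. (\<Sum>r<n. of_int (Adj $$ (i, r)) * of_int (AC $$ (r, k))) * x k)"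
  proof (intro sum.cong refl)
    fix k assume "k \<in> {..<n}"
    then have "(if i = k then dt else 0) = (\<Sum>r<n. Adj $$ (i, r) * AC $$ (r, k))"
      using AdjAC \<open>i < n\<close> by simp
    then show "of_int (if i = k then dt else 0) * x k = (\<Sum>r<n. of_int (Adj $$ (i, r)) * of_int (AC $$ (r, k))) * x k"
      by simp
  qed
  also have "\<dots> = (\<Sum>k<n. \<Sum>r<n. of_int (Adj $$ (i, r)) * (of_int (AC $$ (r, k)) * x k))"
    by (simp add: sum_distrib_right mult.assoc)
  also have "\<dots> = (\<Sum>r<n. \<Sum>k<n. of_int (Adj $$ (i, r)) * (of_int (AC $$ (r, k)) * x k))"
    by (rule sum.swap)
  also have "\<dots> = (\<Sum>r<n. of_int (Adj $$ (i, r)) * (\<Sum>k<n. of_int (AC $$ (r, k)) * x k))"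
    by (simp add: sum_distrib_left)
  also have "\<dots> = 0" using assms(1) by simp
  finally show ?thesis using dt_nz by simp
qed

definition M0 :: "rat mat" where
  "M0 = mat n 2 (\<lambda>(i, m). - rat_of_int ((Adj * AD) $$ (i, m)) / rat_of_int dt)"

lemma M0_idx: "i < n \<Longrightarrow> m < 2 \<Longrightarrow> M0 $$ (i, m) = - rat_of_int (\<Sum>l<n. Adj $$ (i, l) * AD $$ (l, m)) / rat_of_int dt"
  unfolding M0_def using mult_idx[OF Adj_carr AD_carr] by simp

lemma M0_eq: "r < n \<Longrightarrow> m < 2 \<Longrightarrow> (\<Sum>i<n. rat_of_int (AC $$ (r, i)) * M0 $$ (i, m)) = - rat_of_int (AD $$ (r, m))"
proof -
  assume rm: "r < n" "m < 2"
  have "(\<Sum>i<n. AC $$ (r, i) * (\<Sum>l<n. Adj $$ (i, l) * AD $$ (l, m)))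
      = (\<Sum>i<n. \<Sum>l<n. AC $$ (r, i) * Adj $$ (i, l) * AD $$ (l, m))"
    by (simp add: sum_distrib_left mult.assoc)
  also have "\<dots> = (\<Sum>l<n. \<Sum>i<n. AC $$ (r, i) * Adj $$ (i, l) * AD $$ (l, m))"
    by (rule sum.swap)
  also have "\<dots> = (\<Sum>l<n. (\<Sum>i<n. AC $$ (r, i) * Adj $$ (i, l)) * AD $$ (l, m))"
    by (simp add: sum_distrib_right)
  also have "\<dots> = (\<Sum>l<n. (if r = l then dt else 0) * AD $$ (l, m))"
    using ACAdj rm by (intro sum.cong) auto
  also have "\<dots> = (\<Sum>l<n. if l = r then dt * AD $$ (r, m) else 0)"
    by (intro sum.cong) auto
  also have "\<dots> = dt * AD $$ (r, m)" using rm by (simp add: sum.delta)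
  finally have X: "(\<Sum>i<n. AC $$ (r, i) * (\<Sum>l<n. Adj $$ (i, l) * AD $$ (l, m))) = dt * AD $$ (r, m)" .
  have "(\<Sum>i<n. rat_of_int (AC $$ (r, i)) * M0 $$ (i, m))
     = (\<Sum>i<n. - (rat_of_int (AC $$ (r, i) * (\<Sum>l<n. Adj $$ (i, l) * AD $$ (l, m))) / rat_of_int dt))"
    using rm by (intro sum.cong refl) (simp add: M0_idx del: of_int_sum)
  also have "\<dots> = - rat_of_int (\<Sum>i<n. AC $$ (r, i) * (\<Sum>l<n. Adj $$ (i, l) * AD $$ (l, m))) / rat_of_int dt"
    by (simp only: sum_negf sum_divide_distrib[symmetric] of_int_sum)
  also have "\<dots> = - rat_of_int (AD $$ (r, m))" unfolding X using dt_nz by simp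
  finally show ?thesis .
qed

lemma gexp_eq: "gexp A C = M0"
proof -
  have P: "M0 \<in> carrier_mat (dim_row A) 2 \<and> map_mat rat_of_int (colsub A (sorted_list_of_set C)) * M0 =
       - map_mat rat_of_int (colsub A (co_cell A C))"
  proof
    show "M0 \<in> carrier_mat (dim_row A) 2" unfolding M0_def dims by simp
    show "map_mat rat_of_int (colsub A (sorted_list_of_set C)) * M0 = - map_mat rat_of_int (colsub A (co_cell A C))"
      unfolding Cl_def[symmetric] D_def[symmetric] AC_def[symmetric] AD_def[symmetric]
    proof (rule eq_matI)
      fix r m assume "r < dim_row (- map_mat rat_of_int AD)" "m < dim_col (- map_mat rat_of_int AD)"
      then have rm: "r < n" "m < 2" using AD_carr by auto
      have c1: "map_mat rat_of_int AC \<in> carrier_mat n n" using AC_carr by simp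
      have c2: "M0 \<in> carrier_mat n 2" unfolding M0_def by simp
      show "(map_mat rat_of_int AC * M0) $$ (r, m) = (- map_mat rat_of_int AD) $$ (r, m)"
        using mult_idx[OF c1 c2 rm] M0_eq[OF rm] rm AC_carr AD_carr by simp
    qed (use AC_carr AD_carr M0_def in auto)
  qed
  show ?thesis unfolding gexp_def
  proof (rule the_equality)
    show "M0 \<in> carrier_mat (dim_row A) 2 \<and> map_mat rat_of_int (colsub A (sorted_list_of_set C)) * M0 =
       - map_mat rat_of_int (colsub A (co_cell A C))" by (rule P)
    fix M assume M: "M \<in> carrier_mat (dim_row A) 2 \<and> map_mat rat_of_int (colsub A (sorted_list_of_set C)) * M =
       - map_mat rat_of_int (colsub A (co_cell A C))"
    then have Mc: "M \<in> carrier_mat n 2" and Me: "map_mat rat_of_int AC * M = - map_mat rat_of_int AD"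
      unfolding Cl_def[symmetric] D_def[symmetric] AC_def[symmetric] AD_def[symmetric] dims by auto
    have c1: "map_mat rat_of_int AC \<in> carrier_mat n n" using AC_carr by simp
    show "M = M0"
    proof (rule eq_matI)
      fix i m assume "i < dim_row M0" "m < dim_col M0"
      then have im: "i < n" "m < 2" unfolding M0_def by auto
      have "(\<lambda>k. M $$ (k, m) - M0 $$ (k, m)) i = 0"
      proof (rule AC_inj[OF _ im(1)], intro allI impI)
        fix r assume r: "r < n"
        have "(\<Sum>k<n. rat_of_int (AC $$ (r, k)) * M $$ (k, m)) = - rat_of_int (AD $$ (r, m))"
          using arg_cong[OF Me, of "\<lambda>X. X $$ (r, m)"] mult_idx[OF c1 Mc r im(2)] r im AC_carr AD_carr by simp
        then show "(\<Sum>k<n. rat_of_int (AC $$ (r, k)) * (M $$ (k, m) - M0 $$ (k, m))) = 0"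
          using M0_eq[OF r im(2)] by (simp add: right_diff_distrib sum_subtractf)
      qed
      then show "M $$ (i, m) = M0 $$ (i, m)" by simp
    qed (use Mc M0_def in auto)
  qed
qed


definition q :: "nat \<Rightarrow> nat \<Rightarrow> complex" where "q i m = of_rat (M0 $$ (i, m))"

lemma KF: "r < n \<Longrightarrow> m < 2 \<Longrightarrow> (\<Sum>i<n. of_int (A $$ (r, Cl ! i)) * q i m) = - of_int (A $$ (r, D ! m))"
proof -
  assume rm: "r < n" "m < 2"
  have "of_rat (\<Sum>i<n. rat_of_int (AC $$ (r, i)) * M0 $$ (i, m)) = (of_rat (- rat_of_int (AD $$ (r, m))) :: complex)"
    using M0_eq[OF rm] by simp
  then show ?thesis using rm by (simp add: of_rat_sum of_rat_mult q_def AC_idx AD_idx of_rat_minus)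
qed

lemma ker_char: "u \<in> kernel_space A \<longleftrightarrow> (\<forall>i\<ge>n+3. u i = 0) \<and>
   u 0 + (\<Sum>i<n. u (Cl ! i)) + (u (D ! 0) + u (D ! 1)) = 0 \<and>
   (\<forall>r<n. (\<Sum>i<n. of_int (A $$ (r, Cl ! i)) * u (Cl ! i)) + (of_int (A $$ (r, D ! 0)) * u (D ! 0) + of_int (A $$ (r, D ! 1)) * u (D ! 1)) = 0)"
proof -
  have S1: "(\<Sum>i<n+3. u i) = u 0 + (\<Sum>i<n. u (Cl ! i)) + (u (D ! 0) + u (D ! 1))" by (rule sum_decomp)
  have S2: "\<And>r. r < n \<Longrightarrow> (\<Sum>i<n+3. of_int (A $$ (r, i)) * u i) = (\<Sum>i<n. of_int (A $$ (r, Cl ! i)) * u (Cl ! i)) + (of_int (A $$ (r, D ! 0)) * u (D ! 0) + of_int (A $$ (r, D ! 1)) * u (D ! 1))"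
    using zcol by (simp add: sum_decomp[of "\<lambda>i. of_int (A $$ (_, i)) * u i"])
  show ?thesis unfolding kernel_space_def dims using S1 S2 by auto
qed

lemma ker_lin: "u \<in> kernel_space A \<Longrightarrow> v \<in> kernel_space A \<Longrightarrow> (\<lambda>k. a * u k + b * v k) \<in> kernel_space A"
proof -
  assume u: "u \<in> kernel_space A" and v: "v \<in> kernel_space A"
  show ?thesis unfolding kernel_space_def
  proof (intro CollectI conjI allI impI)
    fix i assume "i \<ge> dim_col A" then show "a * u i + b * v i = 0" using u v unfolding kernel_space_def by auto
  next
    have "(\<Sum>i<dim_col A. a * u i + b * v i) = a * (\<Sum>i<dim_col A. u i) + b * (\<Sum>i<dim_col A. v i)"
      by (simp add: sum.distrib sum_distrib_left)
    then show "(\<Sum>i<dim_col A. a * u i + b * v i) = 0" using u v unfolding kernel_space_def by auto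
  next
    fix r assume r: "r < dim_row A"
    have "(\<Sum>i<dim_col A. of_int (A $$ (r, i)) * (a * u i + b * v i)) =
        a * (\<Sum>i<dim_col A. of_int (A $$ (r, i)) * u i) + b * (\<Sum>i<dim_col A. of_int (A $$ (r, i)) * v i)"
      by (simp add: sum.distrib sum_distrib_left algebra_simps)
    then show "(\<Sum>i<dim_col A. of_int (A $$ (r, i)) * (a * u i + b * v i)) = 0" using u v r unfolding kernel_space_def by auto
  qed
qed

lemma ker_zero:
  assumes v: "v \<in> kernel_space A" and v0: "v (D ! 0) = 0" "v (D ! 1) = 0"
  shows "v k = 0"
proof -
  have rows: "\<forall>r<n. (\<Sum>i<n. of_int (AC $$ (r, i)) * v (Cl ! i)) = 0"
    using v v0 unfolding ker_char by (auto simp: AC_idx)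
  have vC: "\<And>i. i < n \<Longrightarrow> v (Cl ! i) = 0"
    using AC_inj[of "\<lambda>i. v (Cl ! i)", OF rows] by simp
  then have "(\<Sum>i<n. v (Cl ! i)) = 0" by simp
  then have vz: "v 0 = 0" using v v0 unfolding ker_char by auto
  show ?thesis
  proof (cases "k < n + 3")
    case True
    then have "k \<in> insert 0 (set Cl \<union> set D)" using Cl Dset C_sub by auto
    then consider "k = 0" | "k \<in> set Cl" | "k \<in> set D" by auto
    then show ?thesis
    proof cases
      case 2 then obtain i where "i < n" "k = Cl ! i" using Cl by (metis in_set_conv_nth)
      then show ?thesis using vC by simp
    next
      case 3 then obtain j where "j < 2" "k = D ! j" using Dlen by (metis in_set_conv_nth)
      then have "j = 0 \<or> j = 1" by auto
      then show ?thesis using v0 \<open>k = D ! j\<close> by auto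
    qed (use vz in auto)
  next
    case False then show ?thesis using v unfolding kernel_space_def dims by auto
  qed
qed

definition idx :: "nat \<Rightarrow> nat" where "idx k = (THE i. i < n \<and> Cl ! i = k)"

lemma idx_nth: "i < n \<Longrightarrow> idx (Cl ! i) = i"
  unfolding idx_def using Cl by (intro the_equality) (auto simp: nth_eq_iff_index_eq)

definition bv :: "nat \<Rightarrow> nat \<Rightarrow> complex" where
  "bv m k = (if k = 0 then - (1 + (\<Sum>i<n. q i m)) else if k \<in> C then q (idx k) m else if k = D ! m then 1 else 0)"

lemma bv_0: "bv m 0 = - (1 + (\<Sum>i<n. q i m))" unfolding bv_def by simp
lemma bv_Cl: "i < n \<Longrightarrow> bv m (Cl ! i) = q i m"
  unfolding bv_def using Cl_props[of i] by (simp add: idx_nth)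
lemma bv_D: "m < 2 \<Longrightarrow> m' < 2 \<Longrightarrow> bv m (D ! m') = (if m = m' then 1 else 0)"
  unfolding bv_def using D_props[of m'] D01 by (auto simp: less_2_cases_iff)
lemma bv_big: "k \<ge> n + 3 \<Longrightarrow> m < 2 \<Longrightarrow> bv m k = 0"
  unfolding bv_def using C_sub D_props[of m] by auto

lemma bv_ker: assumes m: "m < 2" shows "bv m \<in> kernel_space A"
  unfolding ker_char
proof (intro conjI allI impI)
  show "\<And>i. n + 3 \<le> i \<Longrightarrow> bv m i = 0" using bv_big m by auto
  have "bv m (D ! 0) + bv m (D ! 1) = 1" using m bv_D by (auto simp: less_2_cases_iff)
  then show "bv m 0 + (\<Sum>i<n. bv m (Cl ! i)) + (bv m (D ! 0) + bv m (D ! 1)) = 0"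
    by (simp add: bv_0 bv_Cl)
  fix r assume r: "r < n"
  have "of_int (A $$ (r, D ! 0)) * bv m (D ! 0) + of_int (A $$ (r, D ! 1)) * bv m (D ! 1) = of_int (A $$ (r, D ! m))"
    using m bv_D by (auto simp: less_2_cases_iff)
  then show "(\<Sum>i<n. of_int (A $$ (r, Cl ! i)) * bv m (Cl ! i)) +
         (of_int (A $$ (r, D ! 0)) * bv m (D ! 0) + of_int (A $$ (r, D ! 1)) * bv m (D ! 1)) = 0"
    using KF[OF r m] by (simp add: bv_Cl)
qed

lemma recon: assumes u: "u \<in> kernel_space A" shows "u k = u (D ! 0) * bv 0 k + u (D ! 1) * bv 1 k"
proof -
  let ?w = "\<lambda>k. u (D ! 0) * bv 0 k + u (D ! 1) * bv 1 k"
  have w: "?w \<in> kernel_space A" using ker_lin[OF bv_ker bv_ker] by simp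
  have "(\<lambda>k. 1 * u k + (-1) * ?w k) \<in> kernel_space A" by (rule ker_lin[OF u w])
  moreover have "1 * u (D ! 0) + (-1) * ?w (D ! 0) = 0" "1 * u (D ! 1) + (-1) * ?w (D ! 1) = 0"
    using bv_D by auto
  ultimately have "1 * u k + (-1) * ?w k = 0" by (rule ker_zero)
  moreover have "1 * u k + (-1) * ?w k = u k - ?w k" by (simp add: algebra_simps)
  ultimately have "u k - ?w k = 0" by simp
  then show ?thesis by simp
qed

definition cE :: "(nat \<Rightarrow> complex) \<Rightarrow> nat \<Rightarrow> (nat \<Rightarrow> complex) \<Rightarrow> complex" where
  "cE u j v = v (D ! j) / u (D ! j) - v 0 / u 0 + (\<Sum>i<n. q i j * (v (Cl ! i) / u (Cl ! i) - v 0 / u 0))"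

lemma cE_lin: "cE u j (\<lambda>k. a * v k + b * w k) = a * cE u j v + b * cE u j w"
proof -
  have "(\<Sum>i<n. q i j * ((a * v (Cl ! i) + b * w (Cl ! i)) / u (Cl ! i) - (a * v 0 + b * w 0) / u 0))
     = (\<Sum>i<n. a * (q i j * (v (Cl ! i) / u (Cl ! i) - v 0 / u 0)) + b * (q i j * (w (Cl ! i) / u (Cl ! i) - w 0 / u 0)))"
    by (intro sum.cong refl) (simp add: algebra_simps add_divide_distrib diff_divide_distrib)
  also have "\<dots> = a * (\<Sum>i<n. q i j * (v (Cl ! i) / u (Cl ! i) - v 0 / u 0)) + b * (\<Sum>i<n. q i j * (w (Cl ! i) / u (Cl ! i) - w 0 / u 0))"
    by (simp add: sum.distrib sum_distrib_left)
  finally show ?thesis unfolding cE_def by (simp add: algebra_simps add_divide_distrib diff_divide_distrib)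
qed

lemma cE_self: assumes "\<forall>k<n+3. u k \<noteq> 0" "j < 2" shows "cE u j u = 0"
proof -
  have "u (D ! j) \<noteq> 0" "u 0 \<noteq> 0" using assms D_props by auto
  moreover have "\<And>i. i < n \<Longrightarrow> u (Cl ! i) \<noteq> 0" using assms Cl_props by auto
  ultimately show ?thesis unfolding cE_def by simp
qed

lemma cE_bv: "j < 2 \<Longrightarrow> m < 2 \<Longrightarrow> cE u j (bv m) = (if j = m then 1 / u (D ! j) else 0)
   + (\<Sum>i<n. q i j * q i m / u (Cl ! i)) + (1 + (\<Sum>i<n. q i m)) * (1 + (\<Sum>i<n. q i j)) / u 0"
proof -
  assume jm: "j < 2" "m < 2"
  have "(\<Sum>i<n. q i j * (bv m (Cl ! i) / u (Cl ! i) - bv m 0 / u 0))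
      = (\<Sum>i<n. q i j * q i m / u (Cl ! i) + q i j * ((1 + (\<Sum>i<n. q i m)) / u 0))"
    by (intro sum.cong refl) (simp add: bv_Cl bv_0 algebra_simps add_divide_distrib diff_divide_distrib)
  also have "\<dots> = (\<Sum>i<n. q i j * q i m / u (Cl ! i)) + (\<Sum>i<n. q i j) * ((1 + (\<Sum>i<n. q i m)) / u 0)"
    by (simp add: sum.distrib sum_distrib_right sum_divide_distrib)
  finally show ?thesis unfolding cE_def using jm by (simp add: bv_D bv_0 algebra_simps add_divide_distrib diff_divide_distrib)
qed

lemma H_sym: "cE u 0 (bv 1) = cE u 1 (bv 0)"
  by (simp add: cE_bv mult.commute)

definition d :: nat where "d = nat \<bar>dt\<bar>"
definition ei :: "nat \<Rightarrow> nat \<Rightarrow> int" where "ei i j = - (sgn dt * (\<Sum>l<n. Adj $$ (i, l) * AD $$ (l, j)))"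

lemma d_odd: "odd d" using dt_odd unfolding d_def by (simp add: even_nat_iff)

lemma d_M0: "i < n \<Longrightarrow> j < 2 \<Longrightarrow> of_nat d * M0 $$ (i, j) = of_int (ei i j)"
proof -
  assume ij: "i < n" "j < 2"
  have "rat_of_int \<bar>dt\<bar> / rat_of_int dt = rat_of_int (sgn dt)"
    using dt_nz by (cases "dt > 0") (auto simp: field_simps)
  then show ?thesis using ij dt_nz unfolding d_def ei_def
    by (simp add: M0_idx field_simps)
qed

lemma d_q: "i < n \<Longrightarrow> j < 2 \<Longrightarrow> of_nat d * q i j = of_int (ei i j)"
proof -
  assume ij: "i < n" "j < 2"
  have "of_rat (of_nat d * M0 $$ (i, j)) = (of_rat (of_int (ei i j)) :: complex)" using d_M0[OF ij] by simp
  then show ?thesis unfolding q_def by (simp add: of_rat_mult)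
qed

definition Rj :: "(nat \<Rightarrow> 'a::field) \<Rightarrow> nat \<Rightarrow> 'a" where
  "Rj u j = (u (D ! j) / u 0) ^ d * (\<Prod>i<n. (u (Cl ! i) / u 0) powi (ei i j))"

lemma Rj_scale: "c \<noteq> 0 \<Longrightarrow> Rj (\<lambda>k. c * u k) j = Rj u j"
  unfolding Rj_def by simp

lemma gamma_pow: assumes "(a, b) \<in> gamma_set A C u"
  shows "a ^ d = Rj u 0 \<and> b ^ d = Rj u 1"
proof -
  obtain L where L: "\<forall>i<n. exp (L i) = u (Cl ! i) / u 0"
    and ab: "a = u (D ! 0) / u 0 * exp (\<Sum>i<n. q i 0 * L i)" "b = u (D ! 1) / u 0 * exp (\<Sum>i<n. q i 1 * L i)"
    using assms unfolding gamma_set_def Let_def Cl_def[symmetric] D_def[symmetric] gexp_eq dims q_def by auto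
  have key: "j < 2 \<Longrightarrow> exp (\<Sum>i<n. q i j * L i) ^ d = (\<Prod>i<n. (u (Cl ! i) / u 0) powi (ei i j))" for j
  proof -
    assume j: "j < 2"
    have "exp (\<Sum>i<n. q i j * L i) ^ d = exp (of_nat d * (\<Sum>i<n. q i j * L i))"
      by (simp add: exp_of_nat_mult)
    also have "\<dots> = exp (\<Sum>i<n. of_int (ei i j) * L i)"
      using d_q j by (simp add: sum_distrib_left mult.assoc[symmetric])
    also have "\<dots> = (\<Prod>i<n. exp (of_int (ei i j) * L i))" by (simp add: exp_sum)
    also have "\<dots> = (\<Prod>i<n. exp (L i) powi (ei i j))" by (simp add: exp_power_int)
    also have "\<dots> = (\<Prod>i<n. (u (Cl ! i) / u 0) powi (ei i j))" using L by simp
    finally show ?thesis .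
  qed
  have "a ^ d = (u (D ! 0) / u 0) ^ d * exp (\<Sum>i<n. q i 0 * L i) ^ d" unfolding ab by (rule power_mult_distrib)
  moreover have "b ^ d = (u (D ! 1) / u 0) ^ d * exp (\<Sum>i<n. q i 1 * L i) ^ d" unfolding ab by (rule power_mult_distrib)
  ultimately show ?thesis unfolding Rj_def using key[of 0] key[of 1] by simp
qed



lemma gamma_set_iff: "(a, b) \<in> gamma_set A C u \<longleftrightarrow> (\<exists>L. (\<forall>i<n. exp (L i) = u (Cl ! i) / u 0) \<and>
   a = u (D ! 0) / u 0 * exp (\<Sum>i<n. q i 0 * L i) \<and> b = u (D ! 1) / u 0 * exp (\<Sum>i<n. q i 1 * L i))"
  unfolding gamma_set_def Let_def Cl_def[symmetric] D_def[symmetric] gexp_eq dims q_def by auto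

lemma all_idx: assumes "P 0" "\<forall>i<n. P (Cl ! i)" "P (D ! 0)" "P (D ! 1)" "k < n + 3" shows "P k"
proof -
  have "k \<in> insert 0 (set Cl \<union> set D)" using assms(5) Cl Dset C_sub by auto
  then consider "k = 0" | "k \<in> set Cl" | "k \<in> set D" by auto
  then show ?thesis
  proof cases
    case 2 then obtain i where "i < n" "k = Cl ! i" using Cl by (metis in_set_conv_nth)
    then show ?thesis using assms by simp
  next
    case 3 then obtain j where "j < 2" "k = D ! j" using Dlen by (metis in_set_conv_nth)
    then have "j = 0 \<or> j = 1" by auto
    then show ?thesis using assms \<open>k = D ! j\<close> by auto
  qed (use assms in auto)
qed

lemma q_real: "q i m \<in> \<real>"
proof -
  obtain a b where ab: "quotient_of (M0 $$ (i, m)) = (a, b)" by (cases "quotient_of (M0 $$ (i, m))")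
  then have "M0 $$ (i, m) = of_int a / of_int b" by (rule quotient_of_div)
  then have "q i m = of_int a / of_int b" unfolding q_def by (simp add: of_rat_divide)
  then show ?thesis by simp
qed

lemma bv_real: "bv m k \<in> \<real>"
  unfolding bv_def using q_real by auto

lemma Rj_of_real: "of_real (Rj yr j) = Rj (\<lambda>k. (of_real (yr k) :: complex)) j"
  unfolding Rj_def by simp

lemma gamma_real_pow: "fst (gamma_real A C yr) ^ d = Rj yr 0 \<and> snd (gamma_real A C yr) ^ d = Rj yr 1"
proof -
  have G: "gamma_real A C yr = (yr (D ! 0) / yr 0 * (\<Prod>i<n. realpow_rat (yr (Cl ! i) / yr 0) (M0 $$ (i, 0))),
      yr (D ! 1) / yr 0 * (\<Prod>i<n. realpow_rat (yr (Cl ! i) / yr 0) (M0 $$ (i, 1))))"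
    unfolding gamma_real_def Let_def Cl_def[symmetric] D_def[symmetric] gexp_eq dims by simp
  have P: "j < 2 \<Longrightarrow> (\<Prod>i<n. realpow_rat (yr (Cl ! i) / yr 0) (M0 $$ (i, j))) ^ d = (\<Prod>i<n. (yr (Cl ! i) / yr 0) powi (ei i j))" for j
    unfolding prod_power_distrib using realpow_pow[OF d_odd d_M0] by simp
  have "fst (gamma_real A C yr) ^ d = (yr (D ! 0) / yr 0) ^ d * (\<Prod>i<n. realpow_rat (yr (Cl ! i) / yr 0) (M0 $$ (i, 0))) ^ d"
    unfolding G fst_conv by (rule power_mult_distrib)
  moreover have "snd (gamma_real A C yr) ^ d = (yr (D ! 1) / yr 0) ^ d * (\<Prod>i<n. realpow_rat (yr (Cl ! i) / yr 0) (M0 $$ (i, 1))) ^ d"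
    unfolding G snd_conv by (rule power_mult_distrib)
  ultimately show ?thesis unfolding Rj_def using P[of 0] P[of 1] by simp
qed

lemma d_pos: "d > 0" using d_odd by (cases d) auto

end

lemma lnd: assumes "0 < Re (a + t0 * b)"
  shows "((\<lambda>t. Ln (a + t * b)) has_field_derivative b / (a + t0 * b)) (at t0)"
proof -
  have "(a + t0 * b) \<notin> \<real>\<^sub>\<le>\<^sub>0"
  proof
    assume "(a + t0 * b) \<in> \<real>\<^sub>\<le>\<^sub>0"
    then obtain r where r: "a + t0 * b = complex_of_real r" "r \<le> 0" by (auto simp: nonpos_Reals_def)
    then have "Re (a + t0 * b) \<le> 0" by (metis Re_complex_of_real)
    then show False using assms by linarith
  qed
  then have L: "(Ln has_field_derivative inverse (a + t0 * b)) (at (a + t0 * b))" by (rule has_field_derivative_Ln)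
  have "((\<lambda>t. a + t * b) has_field_derivative b) (at t0)" by (auto intro!: derivative_eq_intros)
  from DERIV_chain2[OF L this] show ?thesis by (simp add: divide_inverse mult.commute)
qed

lemma alg1: "A0 \<noteq> 0 \<Longrightarrow> AD \<noteq> 0 \<Longrightarrow> (G::complex) * ((bD * A0 - AD * b0) / (A0 * A0)) * E + E * S' * (G * (AD / A0))
   = G * (AD / A0) * E * (bD / AD - b0 / A0 + S')"
  by (simp add: field_simps)

lemma alg2: assumes dd: "z1 * e2 - z2 * e1 \<noteq> (0::complex)"
  shows "x1 = (x1 * e2 - x2 * e1) / (z1 * e2 - z2 * e1) * z1 + (z1 * x2 - z2 * x1) / (z1 * e2 - z2 * e1) * e1"
    and "x2 = (x1 * e2 - x2 * e1) / (z1 * e2 - z2 * e1) * z2 + (z1 * x2 - z2 * x1) / (z1 * e2 - z2 * e1) * e2"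
proof -
  have a: "(x1 * e2 - x2 * e1) * z1 + (z1 * x2 - z2 * x1) * e1 = x1 * (z1 * e2 - z2 * e1)" by (simp add: algebra_simps)
  have b: "(x1 * e2 - x2 * e1) * z2 + (z1 * x2 - z2 * x1) * e2 = x2 * (z1 * e2 - z2 * e1)" by (simp add: algebra_simps)
  have "(x1 * e2 - x2 * e1) / (z1 * e2 - z2 * e1) * z1 + (z1 * x2 - z2 * x1) / (z1 * e2 - z2 * e1) * e1
     = ((x1 * e2 - x2 * e1) * z1 + (z1 * x2 - z2 * x1) * e1) / (z1 * e2 - z2 * e1)"
    by (simp add: add_divide_distrib)
  also have "\<dots> = x1" unfolding a using dd by simp
  finally show "x1 = (x1 * e2 - x2 * e1) / (z1 * e2 - z2 * e1) * z1 + (z1 * x2 - z2 * x1) / (z1 * e2 - z2 * e1) * e1" by simp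
  have "(x1 * e2 - x2 * e1) / (z1 * e2 - z2 * e1) * z2 + (z1 * x2 - z2 * x1) / (z1 * e2 - z2 * e1) * e2
     = ((x1 * e2 - x2 * e1) * z2 + (z1 * x2 - z2 * x1) * e2) / (z1 * e2 - z2 * e1)"
    by (simp add: add_divide_distrib)
  also have "\<dots> = x2" unfolding b using dd by simp
  finally show "x2 = (x1 * e2 - x2 * e1) / (z1 * e2 - z2 * e1) * z2 + (z1 * x2 - z2 * x1) / (z1 * e2 - z2 * e1) * e2" by simp
qed

locale hkm = hk +
  fixes \<alpha> \<beta> :: "nat \<Rightarrow> real" and p :: "int poly poly" and z1 z2 g1 g2 :: complex
  assumes lsp: "{lform \<alpha> \<beta> (n+3) x1 x2 | x1 x2. True} = kernel_space A"
    and Vp: "{(x, y). eval2 p x y = 0} = nabla_bar A C"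
    and gin: "(g1, g2) \<in> gamma_set A C (lform \<alpha> \<beta> (n+3) z1 z2)"
    and g1nz: "g1 \<noteq> 0" and g2nz: "g2 \<noteq> 0"
begin

abbreviation ell where "ell x1 x2 \<equiv> lform \<alpha> \<beta> (n+3) x1 x2"
definition y where "y = ell z1 z2"

definition Lc where "Lc = (SOME L. (\<forall>i<n. exp (L i) = y (Cl ! i) / y 0) \<and>
   g1 = y (D ! 0) / y 0 * exp (\<Sum>i<n. q i 0 * L i) \<and> g2 = y (D ! 1) / y 0 * exp (\<Sum>i<n. q i 1 * L i))"

lemma Lc: "(\<forall>i<n. exp (Lc i) = y (Cl ! i) / y 0) \<and>
   g1 = y (D ! 0) / y 0 * exp (\<Sum>i<n. q i 0 * Lc i) \<and> g2 = y (D ! 1) / y 0 * exp (\<Sum>i<n. q i 1 * Lc i)"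
proof -
  have "\<exists>L. (\<forall>i<n. exp (L i) = y (Cl ! i) / y 0) \<and>
   g1 = y (D ! 0) / y 0 * exp (\<Sum>i<n. q i 0 * L i) \<and> g2 = y (D ! 1) / y 0 * exp (\<Sum>i<n. q i 1 * L i)"
    using gin unfolding gamma_set_iff y_def by blast
  then show ?thesis unfolding Lc_def by (rule someI_ex)
qed

lemma ynz: "k < n + 3 \<Longrightarrow> y k \<noteq> 0"
proof -
  assume k: "k < n + 3"
  have a: "y (D ! 0) \<noteq> 0" "y 0 \<noteq> 0" using Lc g1nz by auto
  have b: "y (D ! 1) \<noteq> 0" using Lc g2nz by auto
  have c: "\<forall>i<n. y (Cl ! i) \<noteq> 0"
  proof (intro allI impI)
    fix i assume "i < n"
    then have "exp (Lc i) = y (Cl ! i) / y 0" using Lc by auto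
    then show "y (Cl ! i) \<noteq> 0" by (metis exp_not_eq_zero div_0)
  qed
  show ?thesis using all_idx[of "\<lambda>k. y k \<noteq> 0", OF a(2) c a(1) b k] .
qed

lemma ell_lin: "ell (a1 + t * b1) (a2 + t * b2) k = ell a1 a2 k + t * ell b1 b2 k"
  unfolding lform_def by (simp add: algebra_simps)
lemma ell_scale: "ell (c * x1) (c * x2) k = c * ell x1 x2 k"
  unfolding lform_def by (simp add: algebra_simps)
lemma ell_ker: "ell x1 x2 \<in> kernel_space A" using lsp by blast
lemma ker_ell: "u \<in> kernel_space A \<Longrightarrow> \<exists>x1 x2. u = ell x1 x2" using lsp by blast

definition gg :: "nat \<Rightarrow> complex" where "gg j = (if j = 0 then g1 else g2)"
definition rr where "rr k x1 x2 = ell x1 x2 k / y k"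
definition inU where "inU x1 x2 \<longleftrightarrow> (\<forall>k<n+3. 0 < Re (rr k x1 x2))"
definition Gf where "Gf j x1 x2 = gg j * (rr (D ! j) x1 x2 / rr 0 x1 x2) *
   exp (\<Sum>i<n. q i j * (Ln (rr (Cl ! i) x1 x2) - Ln (rr 0 x1 x2)))"

lemma gg: "j < 2 \<Longrightarrow> gg j = y (D ! j) / y 0 * exp (\<Sum>i<n. q i j * Lc i)"
  using Lc unfolding gg_def by (auto simp: less_2_cases_iff)

lemma inU_rr: "inU x1 x2 \<Longrightarrow> k < n + 3 \<Longrightarrow> rr k x1 x2 \<noteq> 0"
  unfolding inU_def by fastforce
lemma inU_nz: "inU x1 x2 \<Longrightarrow> k < n + 3 \<Longrightarrow> ell x1 x2 k \<noteq> 0"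
  using inU_rr unfolding rr_def by fastforce
lemma inU_base: "inU z1 z2" unfolding inU_def rr_def y_def[symmetric] using ynz by simp

lemma Cl_lt: "i < n \<Longrightarrow> Cl ! i < n + 3" using Cl_props by blast
lemma D_lt: "j < 2 \<Longrightarrow> D ! j < n + 3" using D_props by blast

lemma G_in: assumes U: "inU x1 x2" shows "(Gf 0 x1 x2, Gf 1 x1 x2) \<in> gamma_set A C (ell x1 x2)"
proof -
  let ?u = "ell x1 x2"
  define L' where "L' i = Lc i + Ln (rr (Cl ! i) x1 x2) - Ln (rr 0 x1 x2)" for i
  have r0: "rr 0 x1 x2 \<noteq> 0" using inU_rr[OF U] by simp
  have y0: "y 0 \<noteq> 0" using ynz by simp
  have u0: "?u 0 \<noteq> 0" using inU_nz[OF U] by simp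
  have E: "\<forall>i<n. exp (L' i) = ?u (Cl ! i) / ?u 0"
  proof (intro allI impI)
    fix i assume i: "i < n"
    have rC: "rr (Cl ! i) x1 x2 \<noteq> 0" using inU_rr[OF U Cl_lt[OF i]] .
    have yC: "y (Cl ! i) \<noteq> 0" using ynz Cl_lt[OF i] by simp
    have "exp (L' i) = exp (Lc i) * rr (Cl ! i) x1 x2 / rr 0 x1 x2"
      unfolding L'_def using rC r0 by (simp add: exp_diff exp_add)
    also have "\<dots> = ?u (Cl ! i) / ?u 0" using Lc i rC r0 yC y0 unfolding rr_def by (simp add: field_simps)
    finally show "exp (L' i) = ?u (Cl ! i) / ?u 0" .
  qed
  have G: "Gf j x1 x2 = ?u (D ! j) / ?u 0 * exp (\<Sum>i<n. q i j * L' i)" if j: "j < 2" for j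
  proof -
    have yD: "y (D ! j) \<noteq> 0" using ynz D_lt[OF j] by simp
    have "(\<Sum>i<n. q i j * L' i) = (\<Sum>i<n. q i j * Lc i) + (\<Sum>i<n. q i j * (Ln (rr (Cl ! i) x1 x2) - Ln (rr 0 x1 x2)))"
      unfolding L'_def by (simp add: sum.distrib[symmetric] algebra_simps)
    then have "exp (\<Sum>i<n. q i j * L' i) = exp (\<Sum>i<n. q i j * Lc i) * exp (\<Sum>i<n. q i j * (Ln (rr (Cl ! i) x1 x2) - Ln (rr 0 x1 x2)))"
      by (simp add: exp_add)
    moreover have "?u (D ! j) / ?u 0 = y (D ! j) / y 0 * (rr (D ! j) x1 x2 / rr 0 x1 x2)"
      unfolding rr_def using yD y0 u0 by (simp add: field_simps)
    ultimately show ?thesis unfolding Gf_def gg[OF j] by (simp add: algebra_simps)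
  qed
  show ?thesis unfolding gamma_set_iff using E G[of 0] G[of 1] by auto
qed

lemma G_V: assumes U: "inU x1 x2" shows "eval2 p (Gf 0 x1 x2) (Gf 1 x1 x2) = 0"
proof -
  have "ell x1 x2 \<in> {u \<in> kernel_space A. \<forall>i<dim_col A. u i \<noteq> 0}"
    using ell_ker inU_nz[OF U] dims by auto
  then have "gamma_set A C (ell x1 x2) \<subseteq> (\<Union>u \<in> {u \<in> kernel_space A. \<forall>i<dim_col A. u i \<noteq> 0}. gamma_set A C u)"
    by (rule UN_upper)
  then have "gamma_set A C (ell x1 x2) \<subseteq> nabla_bar A C"
    unfolding nabla_bar_def using closure_subset by (rule subset_trans)
  then have "(Gf 0 x1 x2, Gf 1 x1 x2) \<in> nabla_bar A C" using G_in[OF U] by blast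
  then show ?thesis using Vp by auto
qed

lemma G_base: assumes j: "j < 2" shows "Gf j z1 z2 = gg j"
proof -
  have r1: "rr k z1 z2 = 1" if "k < n + 3" for k using ynz that unfolding rr_def y_def[symmetric] by simp
  then have "(\<Sum>i<n. q i j * (Ln (rr (Cl ! i) z1 z2) - Ln (rr 0 z1 z2))) = 0"
    using Cl_lt by (intro sum.neutral) simp
  then show ?thesis unfolding Gf_def using r1[OF D_lt[OF j]] r1[of 0] by simp
qed

lemma G_deriv: assumes U: "inU (x1 + t0 * e1) (x2 + t0 * e2)" and j: "j < 2"
  shows "((\<lambda>t. Gf j (x1 + t * e1) (x2 + t * e2)) has_field_derivative
     Gf j (x1 + t0 * e1) (x2 + t0 * e2) * cE (ell (x1 + t0 * e1) (x2 + t0 * e2)) j (ell e1 e2)) (at t0)"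
proof -
  define a where "a k = ell x1 x2 k / y k" for k
  define b where "b k = ell e1 e2 k / y k" for k
  have rr_ab: "rr k (x1 + t * e1) (x2 + t * e2) = a k + t * b k" for k t
    unfolding rr_def a_def b_def ell_lin by (simp add: add_divide_distrib)
  have Re_pos: "k < n + 3 \<Longrightarrow> 0 < Re (a k + t0 * b k)" for k
    using U unfolding inU_def rr_ab by auto
  have nz: "k < n + 3 \<Longrightarrow> a k + t0 * b k \<noteq> 0" for k using Re_pos by fastforce
  define S where "S t = (\<Sum>i<n. q i j * (Ln (a (Cl ! i) + t * b (Cl ! i)) - Ln (a 0 + t * b 0)))" for t
  define S' where "S' = (\<Sum>i<n. q i j * (b (Cl ! i) / (a (Cl ! i) + t0 * b (Cl ! i)) - b 0 / (a 0 + t0 * b 0)))"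
  have dS: "(S has_field_derivative S') (at t0)"
    unfolding S_def S'_def
    by (intro DERIV_sum DERIV_cmult DERIV_diff lnd Re_pos Cl_lt) auto
  define Q where "Q t = (a (D ! j) + t * b (D ! j)) / (a 0 + t * b 0)" for t
  have dQ: "(Q has_field_derivative (b (D ! j) * (a 0 + t0 * b 0) - (a (D ! j) + t0 * b (D ! j)) * b 0) /
        ((a 0 + t0 * b 0) * (a 0 + t0 * b 0))) (at t0)"
    unfolding Q_def by (intro DERIV_divide nz) (auto intro!: derivative_eq_intros)
  have fun_eq: "(\<lambda>t. Gf j (x1 + t * e1) (x2 + t * e2)) = (\<lambda>t. gg j * Q t * exp (S t))"
    unfolding Gf_def rr_ab Q_def S_def by simp
  define Q' where "Q' = (b (D ! j) * (a 0 + t0 * b 0) - (a (D ! j) + t0 * b (D ! j)) * b 0) /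
        ((a 0 + t0 * b 0) * (a 0 + t0 * b 0))"
  have d1: "((\<lambda>t. gg j * Q t) has_field_derivative gg j * Q') (at t0)"
    unfolding Q'_def by (rule DERIV_cmult[OF dQ])
  have d2: "((\<lambda>t. exp (S t)) has_field_derivative exp (S t0) * S') (at t0)"
    by (rule DERIV_chain2[OF DERIV_exp dS])
  have dG: "((\<lambda>t. gg j * Q t * exp (S t)) has_field_derivative
      gg j * Q' * exp (S t0) + exp (S t0) * S' * (gg j * Q t0)) (at t0)"
    by (rule DERIV_mult[OF d1 d2])
  have yk: "k < n + 3 \<Longrightarrow> y k \<noteq> 0" for k using ynz by simp
  have ratio: "k < n + 3 \<Longrightarrow> ell e1 e2 k / ell (x1 + t0 * e1) (x2 + t0 * e2) k = b k / (a k + t0 * b k)" for k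
    unfolding a_def b_def ell_lin using yk[of k] by (simp add: field_simps)
  have cE_eq: "cE (ell (x1 + t0 * e1) (x2 + t0 * e2)) j (ell e1 e2) =
     b (D ! j) / (a (D ! j) + t0 * b (D ! j)) - b 0 / (a 0 + t0 * b 0) + S'"
    unfolding cE_def S'_def using ratio[OF D_lt[OF j]] ratio[of 0] ratio[OF Cl_lt] by simp
  have Gt0: "Gf j (x1 + t0 * e1) (x2 + t0 * e2) = gg j * Q t0 * exp (S t0)" using fun_eq by meson
  have "gg j * Q' * exp (S t0) + exp (S t0) * S' * (gg j * Q t0)
      = gg j * Q t0 * exp (S t0) * (b (D ! j) / (a (D ! j) + t0 * b (D ! j)) - b 0 / (a 0 + t0 * b 0) + S')"
    unfolding Q_def Q'_def using alg1[OF nz[of 0] nz[OF D_lt[OF j]]] by simp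
  then show ?thesis using dG unfolding fun_eq Gt0 cE_eq by simp
qed


definition W where "W j x1 x2 = (if j = 0 then eval2 (dX p) else eval2 (dY p)) (Gf 0 x1 x2) (Gf 1 x1 x2) * Gf j x1 x2"

lemma open_T: "open {t. inU (x1 + t * e1) (x2 + t * e2)}"
proof -
  have "{t. inU (x1 + t * e1) (x2 + t * e2)} = (\<Inter>k\<in>{..<n+3}. {t. 0 < Re ((ell x1 x2 k + t * ell e1 e2 k) / y k)})"
    unfolding inU_def rr_def ell_lin by auto
  also have "open \<dots>"
    using ynz by (intro open_INT ballI finite_lessThan open_Collect_less continuous_intros) auto
  finally show ?thesis .
qed

lemma key_id: assumes U: "inU x1 x2"
  shows "W 0 x1 x2 * cE (ell x1 x2) 0 (ell e1 e2) + W 1 x1 x2 * cE (ell x1 x2) 1 (ell e1 e2) = 0"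
proof -
  let ?T = "{t. inU (x1 + t * e1) (x2 + t * e2)}"
  have U0: "inU (x1 + 0 * e1) (x2 + 0 * e2)" using U by simp
  have d0: "((\<lambda>t. Gf 0 (x1 + t * e1) (x2 + t * e2)) has_field_derivative
     Gf 0 x1 x2 * cE (ell x1 x2) 0 (ell e1 e2)) (at 0)" using G_deriv[OF U0, of 0] by simp
  have d1: "((\<lambda>t. Gf 1 (x1 + t * e1) (x2 + t * e2)) has_field_derivative
     Gf 1 x1 x2 * cE (ell x1 x2) 1 (ell e1 e2)) (at 0)" using G_deriv[OF U0, of 1] by simp
  have df: "((\<lambda>t. eval2 p (Gf 0 (x1 + t * e1) (x2 + t * e2)) (Gf 1 (x1 + t * e1) (x2 + t * e2))) has_field_derivative
     W 0 x1 x2 * cE (ell x1 x2) 0 (ell e1 e2) + W 1 x1 x2 * cE (ell x1 x2) 1 (ell e1 e2)) (at 0)"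
    using eval2_deriv[OF d0 d1, of p] unfolding W_def by (simp add: mult.assoc)
  have "((\<lambda>t. eval2 p (Gf 0 (x1 + t * e1) (x2 + t * e2)) (Gf 1 (x1 + t * e1) (x2 + t * e2))) has_field_derivative 0) (at 0)"
  proof (rule has_field_derivative_transform_within_open[of "\<lambda>_. 0" 0 0 ?T])
    show "((\<lambda>_. 0) has_field_derivative 0) (at 0)" by simp
    show "open ?T" by (rule open_T)
    show "0 \<in> ?T" using U by simp
    fix t assume "t \<in> ?T"
    then show "0 = eval2 p (Gf 0 (x1 + t * e1) (x2 + t * e2)) (Gf 1 (x1 + t * e1) (x2 + t * e2))"
      using G_V by simp
  qed
  then show ?thesis using df DERIV_unique by blast
qed

lemma sig_ex: "m < 2 \<Longrightarrow> \<exists>s. ell (fst s) (snd s) = bv m"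
  using ker_ell[OF bv_ker] by (metis fst_conv snd_conv)

definition sg where "sg m = (SOME s. ell (fst s) (snd s) = bv m)"
lemma sg: "m < 2 \<Longrightarrow> ell (fst (sg m)) (snd (sg m)) = bv m"
  unfolding sg_def by (rule someI_ex[OF sig_ex])

definition H where "H j m x1 x2 = cE (ell x1 x2) j (bv m)"

lemma H_W: "inU x1 x2 \<Longrightarrow> m < 2 \<Longrightarrow> W 0 x1 x2 * H 0 m x1 x2 + W 1 x1 x2 * H 1 m x1 x2 = 0"
  using key_id[of x1 x2 "fst (sg m)" "snd (sg m)"] sg[of m] unfolding H_def by simp

lemma cE_recon: "u \<in> kernel_space A \<Longrightarrow> cE w j u = u (D ! 0) * cE w j (bv 0) + u (D ! 1) * cE w j (bv 1)"
proof -
  assume u: "u \<in> kernel_space A"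
  have "u = (\<lambda>k. u (D ! 0) * bv 0 k + u (D ! 1) * bv 1 k)" by (rule ext) (rule recon[OF u])
  then have "cE w j u = cE w j (\<lambda>k. u (D ! 0) * bv 0 k + u (D ! 1) * bv 1 k)" by (rule arg_cong)
  then show ?thesis by (simp only: cE_lin)
qed

lemma H_rho: assumes U: "inU x1 x2" and j: "j < 2"
  shows "ell x1 x2 (D ! 0) * H j 0 x1 x2 + ell x1 x2 (D ! 1) * H j 1 x1 x2 = 0"
proof -
  have "cE (ell x1 x2) j (ell x1 x2) = 0" using cE_self inU_nz[OF U] j by blast
  then show ?thesis using cE_recon[OF ell_ker, of "ell x1 x2" j x1 x2] unfolding H_def by simp
qed

lemma degen: assumes U: "inU x1 x2" and dn: "W 0 x1 x2 * ell x1 x2 (D ! 1) - W 1 x1 x2 * ell x1 x2 (D ! 0) \<noteq> 0"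
  and j: "j < 2"
  shows "cE (ell x1 x2) j (ell e1 e2) = 0"
proof -
  let ?w0 = "W 0 x1 x2" and ?w1 = "W 1 x1 x2" and ?r0 = "ell x1 x2 (D ! 0)" and ?r1 = "ell x1 x2 (D ! 1)"
  let ?h00 = "H 0 0 x1 x2" and ?h01 = "H 0 1 x1 x2" and ?h10 = "H 1 0 x1 x2" and ?h11 = "H 1 1 x1 x2"
  have e1: "?w0 * ?h00 + ?w1 * ?h10 = 0" using H_W[OF U, of 0] by simp
  have e2: "?w0 * ?h01 + ?w1 * ?h11 = 0" using H_W[OF U, of 1] by simp
  have e3: "?r0 * ?h00 + ?r1 * ?h01 = 0" using H_rho[OF U, of 0] by simp
  have e4: "?r0 * ?h10 + ?r1 * ?h11 = 0" using H_rho[OF U, of 1] by simp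
  have sym: "?h01 = ?h10" unfolding H_def by (rule H_sym)
  have "?h01 * (?w0 * ?r1 - ?w1 * ?r0) = ?w0 * (?r0 * ?h00 + ?r1 * ?h01) - ?r0 * (?w0 * ?h00 + ?w1 * ?h10)"
    using sym by (simp add: algebra_simps)
  then have "?h01 * (?w0 * ?r1 - ?w1 * ?r0) = 0" using e1 e3 by simp
  then have h01: "?h01 = 0" using dn by simp
  have "?h00 * (?w0 * ?r1 - ?w1 * ?r0) = ?r1 * (?w0 * ?h00 + ?w1 * ?h10) - ?w1 * (?r0 * ?h00 + ?r1 * ?h01)"
    using sym by (simp add: algebra_simps)
  then have h00: "?h00 = 0" using e1 e3 dn by simp
  have "?h11 * (?w0 * ?r1 - ?w1 * ?r0) = ?w0 * (?r0 * ?h10 + ?r1 * ?h11) - ?r0 * (?w0 * ?h01 + ?w1 * ?h11)"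
    using sym by (simp add: algebra_simps)
  then have h11: "?h11 = 0" using e2 e4 dn by simp
  have h10: "?h10 = 0" using h01 sym by simp
  have "cE (ell x1 x2) j (ell e1 e2) = ell e1 e2 (D ! 0) * H j 0 x1 x2 + ell e1 e2 (D ! 1) * H j 1 x1 x2"
    using cE_recon[OF ell_ker] unfolding H_def by simp
  moreover have "j = 0 \<or> j = 1" using j by auto
  ultimately show ?thesis using h00 h01 h10 h11 by auto
qed


lemma z_nz: "z1 \<noteq> 0 \<or> z2 \<noteq> 0"
proof (rule ccontr)
  assume "\<not> (z1 \<noteq> 0 \<or> z2 \<noteq> 0)"
  then have "y 0 = 0" unfolding y_def lform_def by simp
  then show False using ynz[of 0] by simp
qed

lemma dir_ex: "\<exists>e1 e2. z1 * e2 - z2 * e1 \<noteq> 0"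
proof (cases "z2 = 0")
  case True then have "z1 * 1 - z2 * 0 \<noteq> 0" using z_nz by simp
  then show ?thesis by blast
next
  case False then have "z1 * 0 - z2 * 1 \<noteq> 0" by simp
  then show ?thesis by blast
qed

lemma open_S: "open {s. \<forall>k<n+3. ell (z1 + s * e1) (z2 + s * e2) k \<noteq> 0}"
proof -
  have "{s. \<forall>k<n+3. ell (z1 + s * e1) (z2 + s * e2) k \<noteq> 0} = (\<Inter>k\<in>{..<n+3}. {s. ell z1 z2 k + s * ell e1 e2 k \<noteq> 0})"
    unfolding ell_lin by auto
  also have "open \<dots>"
    by (intro open_INT ballI finite_lessThan open_Collect_neq continuous_intros)
  finally show ?thesis .
qed

lemma finite_compl_S: "finite (- {s. \<forall>k<n+3. ell (z1 + s * e1) (z2 + s * e2) k \<noteq> 0})"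
proof -
  have "- {s. \<forall>k<n+3. ell (z1 + s * e1) (z2 + s * e2) k \<noteq> 0} \<subseteq> (\<lambda>k. - y k / ell e1 e2 k) ` {..<n+3}"
  proof
    fix s assume "s \<in> - {s. \<forall>k<n+3. ell (z1 + s * e1) (z2 + s * e2) k \<noteq> 0}"
    then obtain k where k: "k < n + 3" "y k + s * ell e1 e2 k = 0" unfolding ell_lin y_def by auto
    then have "ell e1 e2 k \<noteq> 0" using ynz[OF k(1)] by auto
    then have "s = - y k / ell e1 e2 k" using k(2) by (simp add: field_simps add_eq_0_iff2)
    then show "s \<in> (\<lambda>k. - y k / ell e1 e2 k) ` {..<n+3}" using k(1) by auto
  qed
  then show ?thesis using finite_subset by blast
qed

lemma connected_S: "connected {s. \<forall>k<n+3. ell (z1 + s * e1) (z2 + s * e2) k \<noteq> 0}"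
proof -
  let ?S = "{s. \<forall>k<n+3. ell (z1 + s * e1) (z2 + s * e2) k \<noteq> 0}"
  have "path_connected (- (- ?S))"
    by (rule path_connected_complement_countable) (auto intro: countable_finite finite_compl_S)
  then show ?thesis using path_connected_imp_connected by simp
qed

lemma holo_R: assumes j: "j < 2"
  shows "(\<lambda>s. Rj (ell (z1 + s * e1) (z2 + s * e2)) j) holomorphic_on {s. \<forall>k<n+3. ell (z1 + s * e1) (z2 + s * e2) k \<noteq> 0}"
proof -
  let ?S = "{s. \<forall>k<n+3. ell (z1 + s * e1) (z2 + s * e2) k \<noteq> 0}"
  have nz: "\<And>s k. s \<in> ?S \<Longrightarrow> k < n + 3 \<Longrightarrow> ell z1 z2 k + s * ell e1 e2 k \<noteq> 0"
    unfolding ell_lin by auto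
  have n0: "\<And>s. s \<in> ?S \<Longrightarrow> ell z1 z2 0 + s * ell e1 e2 0 \<noteq> 0" using nz by simp
  have nC: "\<And>s i. s \<in> ?S \<Longrightarrow> i < n \<Longrightarrow> (ell z1 z2 (Cl ! i) + s * ell e1 e2 (Cl ! i)) / (ell z1 z2 0 + s * ell e1 e2 0) \<noteq> 0"
    using nz Cl_lt by simp
  show ?thesis unfolding Rj_def ell_lin
    by (intro holomorphic_intros) (auto dest!: Cl_lt)
qed

lemma det_zero: "W 0 z1 z2 * y (D ! 1) - W 1 z1 z2 * y (D ! 0) = 0"
proof (rule ccontr)
  assume dn: "W 0 z1 z2 * y (D ! 1) - W 1 z1 z2 * y (D ! 0) \<noteq> 0"
  obtain e1 e2 where ind: "z1 * e2 - z2 * e1 \<noteq> 0" using dir_ex by blast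
  define Fs where "Fs s = W 0 (z1 + s * e1) (z2 + s * e2) * ell (z1 + s * e1) (z2 + s * e2) (D ! 1)
       - W 1 (z1 + s * e1) (z2 + s * e2) * ell (z1 + s * e1) (z2 + s * e2) (D ! 0)" for s
  let ?T = "{t. inU (z1 + t * e1) (z2 + t * e2)}"
  let ?S = "{s. \<forall>k<n+3. ell (z1 + s * e1) (z2 + s * e2) k \<noteq> 0}"
  have U0: "inU (z1 + 0 * e1) (z2 + 0 * e2)" using inU_base by simp
  have dG0: "((\<lambda>s. Gf 0 (z1 + s * e1) (z2 + s * e2)) has_field_derivative
      Gf 0 (z1 + 0 * e1) (z2 + 0 * e2) * cE (ell (z1 + 0 * e1) (z2 + 0 * e2)) 0 (ell e1 e2)) (at 0)"
    by (rule G_deriv[OF U0]) simp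
  have dG1: "((\<lambda>s. Gf 1 (z1 + s * e1) (z2 + s * e2)) has_field_derivative
      Gf 1 (z1 + 0 * e1) (z2 + 0 * e2) * cE (ell (z1 + 0 * e1) (z2 + 0 * e2)) 1 (ell e1 e2)) (at 0)"
    by (rule G_deriv[OF U0]) simp
  have cG0: "isCont (\<lambda>s. Gf 0 (z1 + s * e1) (z2 + s * e2)) 0" using DERIV_continuous[OF dG0] .
  have cG1: "isCont (\<lambda>s. Gf 1 (z1 + s * e1) (z2 + s * e2)) 0" using DERIV_continuous[OF dG1] .
  have cE2: "isCont (\<lambda>s. eval2 h (Gf 0 (z1 + s * e1) (z2 + s * e2)) (Gf 1 (z1 + s * e1) (z2 + s * e2))) 0" for h
    using DERIV_continuous[OF eval2_deriv[OF dG0 dG1, of h]] .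
  have cell: "isCont (\<lambda>s. ell (z1 + s * e1) (z2 + s * e2) k) 0" for k
    unfolding ell_lin by (intro continuous_intros)
  have cF: "isCont Fs 0" unfolding Fs_def W_def
    using cG0 cG1 cE2 cell by (intro continuous_intros) auto
  have F0: "Fs 0 \<noteq> 0" using dn unfolding Fs_def y_def by simp
  obtain e1' where e1': "e1' > 0" "\<And>s. dist 0 s < e1' \<Longrightarrow> Fs s \<noteq> 0"
    using continuous_at_avoid[OF cF F0] by blast
  have "open ?T" by (rule open_T)
  moreover have "0 \<in> ?T" using inU_base by simp
  ultimately obtain e2' where e2': "e2' > 0" "ball 0 e2' \<subseteq> ?T" using open_contains_ball by blast
  define B where "B = ball (0::complex) (min e1' e2')"
  have Bp: "s \<in> B \<Longrightarrow> inU (z1 + s * e1) (z2 + s * e2) \<and> Fs s \<noteq> 0" for s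
    using e1' e2' unfolding B_def by auto
  have B0: "0 \<in> B" using e1' e2' unfolding B_def by simp
  have oB: "open B" "convex B" unfolding B_def by auto
  have Gc: "Gf j (z1 + s * e1) (z2 + s * e2) = gg j" if j: "j < 2" and s: "s \<in> B" for j s
  proof -
    have "\<exists>c. \<forall>x\<in>B. Gf j (z1 + x * e1) (z2 + x * e2) = c"
    proof (rule has_field_derivative_zero_constant[OF oB(2)])
      fix x assume x: "x \<in> B"
      have "cE (ell (z1 + x * e1) (z2 + x * e2)) j (ell e1 e2) = 0"
        using degen[of "z1 + x * e1" "z2 + x * e2"] Bp[OF x] j unfolding Fs_def by blast
      then have "((\<lambda>s. Gf j (z1 + s * e1) (z2 + s * e2)) has_field_derivative 0) (at x)"
        using G_deriv[of z1 x e1 z2 e2 j] Bp[OF x] j by simp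
      then show "((\<lambda>s. Gf j (z1 + s * e1) (z2 + s * e2)) has_field_derivative 0) (at x within B)"
        by (rule has_field_derivative_at_within)
    qed
    then obtain c where c: "\<forall>x\<in>B. Gf j (z1 + x * e1) (z2 + x * e2) = c" by blast
    have "c = gg j" using c B0 G_base[OF j] by force
    then show ?thesis using c s by blast
  qed
  have Rc: "Rj (ell (z1 + s * e1) (z2 + s * e2)) j = gg j ^ d" if j: "j < 2" and s: "s \<in> B" for j s
  proof -
    have "Gf 0 (z1 + s * e1) (z2 + s * e2) ^ d = Rj (ell (z1 + s * e1) (z2 + s * e2)) 0 \<and>
          Gf 1 (z1 + s * e1) (z2 + s * e2) ^ d = Rj (ell (z1 + s * e1) (z2 + s * e2)) 1"
      using gamma_pow[OF G_in] Bp[OF s] by blast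
    moreover have "j = 0 \<or> j = 1" using j by auto
    ultimately show ?thesis using Gc s by auto
  qed
  have BS: "B \<subseteq> ?S" using Bp inU_nz by blast
  have Rall: "Rj (ell (z1 + s * e1) (z2 + s * e2)) j = gg j ^ d" if j: "j < 2" and s: "s \<in> ?S" for j s
  proof (rule analytic_continuation_open[of B ?S "\<lambda>s. Rj (ell (z1 + s * e1) (z2 + s * e2)) j" "\<lambda>_. gg j ^ d"])
    show "open B" by (rule oB)
    show "open ?S" by (rule open_S)
    show "B \<noteq> {}" using B0 by blast
    show "connected ?S" by (rule connected_S)
    show "B \<subseteq> ?S" by (rule BS)
    show "(\<lambda>s. Rj (ell (z1 + s * e1) (z2 + s * e2)) j) holomorphic_on ?S" by (rule holo_R[OF j])
    show "(\<lambda>_. gg j ^ d) holomorphic_on ?S" by (intro holomorphic_intros)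
    show "\<And>z. z \<in> B \<Longrightarrow> Rj (ell (z1 + z * e1) (z2 + z * e2)) j = gg j ^ d" using Rc[OF j] by blast
    show "s \<in> ?S" by (rule s)
  qed
  define F where "F j = {w. w ^ d = gg j ^ d} \<union> {w. w ^ d = Rj (ell e1 e2) j}" for j
  have finF: "finite (F j)" for j unfolding F_def using finite_pow_eq d_pos by blast
  have Ru: "Rj u j = gg j ^ d \<or> Rj u j = Rj (ell e1 e2) j"
    if u: "u \<in> kernel_space A" and unz: "\<forall>k<n+3. u k \<noteq> 0" and j: "j < 2" for u j
  proof -
    obtain x1 x2 where ux: "u = ell x1 x2" using ker_ell[OF u] by blast
    define dd0 where "dd0 = z1 * e2 - z2 * e1"
    define a0 where "a0 = (x1 * e2 - x2 * e1) / dd0"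
    define b0 where "b0 = (z1 * x2 - z2 * x1) / dd0"
    have dd0: "dd0 \<noteq> 0" using ind unfolding dd0_def .
    have x1: "x1 = a0 * z1 + b0 * e1" unfolding a0_def b0_def dd0_def by (rule alg2(1)[OF ind])
    have x2: "x2 = a0 * z2 + b0 * e2" unfolding a0_def b0_def dd0_def by (rule alg2(2)[OF ind])
    show ?thesis
    proof (cases "a0 = 0")
      case False
      define sv where "sv = b0 / a0"
      have "x1 = a0 * (z1 + sv * e1)" "x2 = a0 * (z2 + sv * e2)" unfolding sv_def x1 x2 using False by (simp_all add: field_simps)
      then have ue: "u = (\<lambda>k. a0 * ell (z1 + sv * e1) (z2 + sv * e2) k)" unfolding ux by (auto simp: ell_scale)
      have "sv \<in> ?S" using unz unfolding ue by auto
      then have "Rj u j = gg j ^ d" unfolding ue using Rj_scale[OF False, of "ell (z1 + sv * e1) (z2 + sv * e2)" j] Rall[OF j] by simp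
      then show ?thesis by blast
    next
      case True
      then have ue: "u = (\<lambda>k. b0 * ell e1 e2 k)" unfolding ux x1 x2 by (auto simp: ell_scale)
      have "u 0 \<noteq> 0" using unz by simp
      then have "b0 \<noteq> 0" unfolding ue by auto
      then have "Rj u j = Rj (ell e1 e2) j" unfolding ue by (rule Rj_scale)
      then show ?thesis by blast
    qed
  qed
  have "(\<Union>u \<in> {u \<in> kernel_space A. \<forall>i<dim_col A. u i \<noteq> 0}. gamma_set A C u) \<subseteq> F 0 \<times> F 1"
  proof (intro UN_least subsetI)
    fix u ab assume u: "u \<in> {u \<in> kernel_space A. \<forall>i<dim_col A. u i \<noteq> 0}" and ab: "ab \<in> gamma_set A C u"
    obtain a b where abe: "ab = (a, b)" by (cases ab)
    have uk: "u \<in> kernel_space A" "\<forall>k<n+3. u k \<noteq> 0" using u dims by auto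
    have "a ^ d = Rj u 0 \<and> b ^ d = Rj u 1" using gamma_pow ab abe by blast
    then show "ab \<in> F 0 \<times> F 1" unfolding abe F_def using Ru[OF uk, of 0] Ru[OF uk, of 1] by auto
  qed
  then have "nabla_bar A C \<subseteq> F 0 \<times> F 1" unfolding nabla_bar_def
    by (rule closure_minimal) (intro finite_imp_closed finite_cartesian_product finF)
  then have "{(x, y). eval2 p x y = 0} \<subseteq> F 0 \<times> F 1" using Vp by simp
  moreover have "finite (F 0 \<times> F 1)" using finF by simp
  moreover have "eval2 p g1 g2 = 0" using G_V[OF inU_base] G_base[of 0] G_base[of 1] unfolding gg_def by simp
  ultimately show False using zeroset_infinite[of p g1 g2] finite_subset by blast
qed


lemma final:
  fixes r1 r2 :: real
  assumes gr: "g1 = of_real r1" "g2 = of_real r2"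
    and grad: "\<not> (eval2 (dX p) g1 g2 = 0 \<and> eval2 (dY p) g1 g2 = 0)"
  shows "\<exists>m1 m2 :: real. (m1, m2) \<noteq> (0, 0) \<and>
           rlform \<alpha> \<beta> (n+3) m1 m2 0 \<noteq> 0 \<and> (\<forall>i\<in>C. rlform \<alpha> \<beta> (n+3) m1 m2 i \<noteq> 0) \<and>
           gamma_real A C (rlform \<alpha> \<beta> (n+3) m1 m2) = (r1, r2)"
proof -
  have W0: "W 0 z1 z2 = eval2 (dX p) g1 g2 * g1" unfolding W_def using G_base[of 0] G_base[of 1] gg_def by simp
  have W1: "W 1 z1 z2 = eval2 (dY p) g1 g2 * g2" unfolding W_def using G_base[of 0] G_base[of 1] gg_def by simp
  have Wr: "W j z1 z2 \<in> \<real>" if "j < 2" for j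
  proof -
    have "eval2 h g1 g2 \<in> \<real>" for h unfolding gr by (rule eval2_real)
    moreover have "j = 0 \<or> j = 1" using that by auto
    ultimately show ?thesis using W0 W1 gr by auto
  qed
  define w0 where "w0 = W 0 z1 z2"
  define w1 where "w1 = W 1 z1 z2"
  define \<rho>0 where "\<rho>0 = y (D ! 0)"
  define \<rho>1 where "\<rho>1 = y (D ! 1)"
  have r0: "\<rho>0 \<noteq> 0" unfolding \<rho>0_def using ynz D_lt by simp
  have r1: "\<rho>1 \<noteq> 0" unfolding \<rho>1_def using ynz D_lt by simp
  have wnz: "w0 \<noteq> 0 \<or> w1 \<noteq> 0" unfolding w0_def w1_def W0 W1 using grad g1nz g2nz by auto
  have dz: "w0 * \<rho>1 = w1 * \<rho>0" using det_zero unfolding w0_def w1_def \<rho>0_def \<rho>1_def by simp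
  have w0nz: "w0 \<noteq> 0" using wnz dz r0 by auto
  define c where "c = \<rho>0 / w0"
  have c0: "c \<noteq> 0" unfolding c_def using r0 w0nz by simp
  have rc0: "\<rho>0 = c * w0" unfolding c_def using w0nz by simp
  have rc1: "\<rho>1 = c * w1" unfolding c_def using w0nz dz by (simp add: field_simps)
  define \<omega>0 where "\<omega>0 = Re w0"
  define \<omega>1 where "\<omega>1 = Re w1"
  have wo: "w0 = of_real \<omega>0" "w1 = of_real \<omega>1" unfolding \<omega>0_def \<omega>1_def w0_def w1_def using Wr[of 0] Wr[of 1] by simp_all
  define m1 where "m1 = \<omega>0 * Re (fst (sg 0)) + \<omega>1 * Re (fst (sg 1))"
  define m2 where "m2 = \<omega>0 * Re (snd (sg 0)) + \<omega>1 * Re (snd (sg 1))"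
  define yr where "yr = rlform \<alpha> \<beta> (n+3) m1 m2"
  have bvRe: "m < 2 \<Longrightarrow> k < n + 3 \<Longrightarrow> Re (bv m k) = \<alpha> k * Re (fst (sg m)) + \<beta> k * Re (snd (sg m))" for m k
  proof -
    assume mk: "m < 2" "k < n + 3"
    have "bv m k = lform \<alpha> \<beta> (n+3) (fst (sg m)) (snd (sg m)) k" using sg[OF mk(1)] by simp
    then show ?thesis using mk(2) unfolding lform_def by simp
  qed
  have yr_eq: "of_real (yr k) = w0 * bv 0 k + w1 * bv 1 k" for k
  proof (cases "k < n + 3")
    case True
    have "yr k = \<omega>0 * Re (bv 0 k) + \<omega>1 * Re (bv 1 k)"
      unfolding yr_def rlform_def m1_def m2_def using True bvRe[of 0 k] bvRe[of 1 k] by (simp add: algebra_simps)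
    then have "(of_real (yr k) :: complex) = of_real \<omega>0 * of_real (Re (bv 0 k)) + of_real \<omega>1 * of_real (Re (bv 1 k))" by simp
    then show ?thesis using bv_real[of 0 k] bv_real[of 1 k] wo by simp
  next
    case False
    then show ?thesis unfolding yr_def rlform_def using bv_big[of k 0] bv_big[of k 1] by simp
  qed
  have y_eq: "y k = c * of_real (yr k)" for k
  proof -
    have "y k = y (D ! 0) * bv 0 k + y (D ! 1) * bv 1 k" unfolding y_def by (rule recon[OF ell_ker])
    also have "\<dots> = c * (w0 * bv 0 k + w1 * bv 1 k)" using rc0 rc1 unfolding \<rho>0_def \<rho>1_def by (simp add: algebra_simps)
    finally show ?thesis using yr_eq by simp
  qed
  have ynz': "k < n + 3 \<Longrightarrow> yr k \<noteq> 0" for k using ynz[of k] y_eq[of k] by auto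
  have m0: "(m1, m2) \<noteq> (0, 0)" using ynz'[of 0] unfolding yr_def rlform_def by auto
  have yC: "\<forall>i\<in>C. yr i \<noteq> 0" using ynz' C_sub by auto
  have yfun: "y = (\<lambda>k. c * of_real (yr k))" using y_eq by auto
  have gp: "g1 ^ d = Rj y 0 \<and> g2 ^ d = Rj y 1" using gamma_pow[OF gin] unfolding y_def .
  have Ry: "Rj y j = of_real (Rj yr j)" for j unfolding yfun Rj_scale[OF c0] Rj_of_real ..
  have gpr: "fst (gamma_real A C yr) ^ d = Rj yr 0 \<and> snd (gamma_real A C yr) ^ d = Rj yr 1" by (rule gamma_real_pow)
  have "of_real (r1 ^ d) = (of_real (Rj yr 0) :: complex)" using gp Ry gr by simp
  then have e1': "r1 ^ d = Rj yr 0" by (simp only: of_real_eq_iff)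
  have "of_real (r2 ^ d) = (of_real (Rj yr 1) :: complex)" using gp Ry gr by simp
  then have e2': "r2 ^ d = Rj yr 1" by (simp only: of_real_eq_iff)
  have f1: "fst (gamma_real A C yr) = r1"
  proof -
    have "fst (gamma_real A C yr) = root d (fst (gamma_real A C yr) ^ d)" by (simp add: odd_real_root_power_cancel[OF d_odd])
    also have "\<dots> = root d (r1 ^ d)" using e1' gpr by simp
    also have "\<dots> = r1" by (simp add: odd_real_root_power_cancel[OF d_odd])
    finally show ?thesis .
  qed
  have f2: "snd (gamma_real A C yr) = r2"
  proof -
    have "snd (gamma_real A C yr) = root d (snd (gamma_real A C yr) ^ d)" by (simp add: odd_real_root_power_cancel[OF d_odd])
    also have "\<dots> = root d (r2 ^ d)" using e2' gpr by simp
    also have "\<dots> = r2" by (simp add: odd_real_root_power_cancel[OF d_odd])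
    finally show ?thesis .
  qed
  have Geq: "gamma_real A C yr = (r1, r2)" using f1 f2 by (simp add: prod_eq_iff)
  show ?thesis
    by (rule exI[of _ m1], rule exI[of _ m2]) (use m0 ynz'[of 0] yC Geq in \<open>simp add: yr_def\<close>)
qed

end

theorem lemma3p3:
  fixes A :: "int mat" and n :: nat and C :: "nat set"
    and \<alpha> \<beta> :: "nat \<Rightarrow> real" and p :: "int poly poly"
    and l1 l2 :: complex and g1 g2 :: real
  assumes "A \<in> carrier_mat n (n + 3)"
    and "\<forall>i<n+3. \<forall>j<n+3. i \<noteq> j \<longrightarrow> col A i \<noteq> col A j"
    and "\<forall>r<n. A $$ (r, 0) = 0"
    and "affinely_generates A"
    and "odd_cell A C"
    and "{lform \<alpha> \<beta> (n+3) x1 x2 | x1 x2. True} = kernel_space A"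
    and "irreducible p"
    and "{(x, y). eval2 p x y = 0} = nabla_bar A C"
    and "(complex_of_real g1, complex_of_real g2) \<in> gamma_set A C (lform \<alpha> \<beta> (n+3) l1 l2)"
    and "g1 \<noteq> 0" and "g2 \<noteq> 0"
    and "(complex_of_real g1, complex_of_real g2) \<in> nabla_bar A C"
    and "\<not> (eval2 (dX p) (of_real g1) (of_real g2) = 0 \<and> eval2 (dY p) (of_real g1) (of_real g2) = 0)"
  shows "\<exists>m1 m2 :: real. (m1, m2) \<noteq> (0, 0) \<and>
           rlform \<alpha> \<beta> (n+3) m1 m2 0 \<noteq> 0 \<and> (\<forall>i\<in>C. rlform \<alpha> \<beta> (n+3) m1 m2 i \<noteq> 0) \<and>
           gamma_real A C (rlform \<alpha> \<beta> (n+3) m1 m2) = (g1, g2)"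
proof -
  have H: "hkm A n C \<alpha> \<beta> p l1 l2 (complex_of_real g1) (complex_of_real g2)"
    unfolding hkm_def hkm_axioms_def hk_def
    using assms(1,3,5,6,8,9,10,11) by simp
  interpret hkm A n C \<alpha> \<beta> p l1 l2 "complex_of_real g1" "complex_of_real g2" by (rule H)
  show ?thesis by (rule final) (use assms(13) in simp_all)
qed

end
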